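(* Let $\mathcal{M}$ be an MDP (a stochastic game in which only one player has vertices) with vertex set $V$ and a priority function $\Omega_1:V\to\mathbb{N}$, and let $\psi=\mathsf{Parity}(\Omega_1)$. Suppose $\mathsf{Pr}_v^{\sigma}(\psi)=1$ for all vertices $v\in V$ and all strategies $\sigma$ of the player. Let $p$ be an odd priority in the range of $\Omega_1$. Then for every $\epsilon>0$ there exists $N_\epsilon\in\mathbb{N}$ such that for all strategies $\sigma$ and all vertices $v$, $\mathsf{Pr}_v^{\sigma}(\mathsf{Unlucky}(p,N_\epsilon))<\epsilon$.
   Context: A stochastic game $\langle V,(V_1,V_2,V_\Diamond),E,\delta\rangle$ has a finite vertex set $V$ partitioned into Player-1, Player-2 and probabilistic vertices, an edge set $E\subseteq V\times V$ in which every vertex has at least one successor, and $\delta:V_\Diamond\to\mathcal{D}(V)$ giving for each probabilistic vertex a probability distribution whose support is exactly its set of successors. An MDP is a stochastic game where one of $V_1,V_2$ is empty. A play is an infinite path; a strategy for Player $i$ maps each history (finite path) ending in a $V_i$ vertex to a successor of its last vertex. $\mathsf{Pr}_v^{\sigma}$ denotes the induced probability measure on plays from $v$. $\mathsf{Parity}(\Omega)$ is the set of plays $v_0v_1\dots$ with $\limsup_j\Omega(v_j)$ even. For a play $\rho$, $\pi_{\Omega_1\ge p}(\rho)$ is the sequence $\Omega_1(\rho)$ with all priorities smaller than $p$ removed. $\mathsf{Unlucky}(p,N)$ is the set of plays $\rho$ such that the first $N$ elements of $\pi_{\Omega_1\ge p}(\rho)$ exist and are all equal to $p$ (i.e. at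 least $N$ priorities $\ge p$ occur and the first $N$ of them equal $p$). *)

theory Defs
  imports "HOL-Probability.Probability"
begin

text \<open>Markov decision processes (stochastic games with only one player) over a finite
  vertex type 'v (so V = UNIV).  V1 are the player's vertices, all other vertices are
  probabilistic; E is the edge relation and delta the distributions at probabilistic vertices.\<close>

definition mdp :: "('v::finite \<times> 'v) set \<Rightarrow> 'v set \<Rightarrow> ('v \<Rightarrow> 'v pmf) \<Rightarrow> bool" where
  "mdp E V1 \<delta> \<longleftrightarrow>
     (\<forall>u. \<exists>w. (u, w) \<in> E) \<and>
     (\<forall>u. u \<notin> V1 \<longrightarrow> set_pmf (\<delta> u) = {w. (u, w) \<in> E})"

definition history :: "('v \<times> 'v) set \<Rightarrow> 'v list \<Rightarrow> bool" where
  "history E h \<longleftrightarrow> h \<noteq> [] \<and> (\<forall>i. Suc i < length h \<longrightarrow> (h ! i, h ! Suc i) \<in> E)"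

text \<open>A strategy maps each history ending in a player vertex to a successor of its last vertex
  (its values on other lists are irrelevant).\<close>
definition strategy :: "('v \<times> 'v) set \<Rightarrow> 'v set \<Rightarrow> ('v list \<Rightarrow> 'v) \<Rightarrow> bool" where
  "strategy E V1 \<sigma> \<longleftrightarrow> (\<forall>h. history E h \<and> last h \<in> V1 \<longrightarrow> (last h, \<sigma> h) \<in> E)"

text \<open>One-step kernel: given the first i vertices of the play, the distribution of vertex i.\<close>
definition step_kernel ::
  "'v set \<Rightarrow> ('v \<Rightarrow> 'v pmf) \<Rightarrow> ('v list \<Rightarrow> 'v) \<Rightarrow> 'v \<Rightarrow> nat \<Rightarrow> (nat \<Rightarrow> 'v) \<Rightarrow> 'v measure" where
  "step_kernel V1 \<delta> \<sigma> v i \<omega> = measure_pmf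
     (if i = 0 then return_pmf v
      else (let h = map \<omega> [0..<i] in
            if last h \<in> V1 then return_pmf (\<sigma> h) else \<delta> (last h)))"

text \<open>The probability measure Pr_v^sigma on plays (nat \<Rightarrow> 'v), obtained by the
  Ionescu-Tulcea construction from the one-step kernels.\<close>
definition play_measure ::
  "'v set \<Rightarrow> ('v \<Rightarrow> 'v pmf) \<Rightarrow> ('v list \<Rightarrow> 'v) \<Rightarrow> 'v \<Rightarrow> (nat \<Rightarrow> 'v) measure" where
  "play_measure V1 \<delta> \<sigma> v =
     projective_family.lim UNIV
       (Ionescu_Tulcea.CI (step_kernel V1 \<delta> \<sigma> v) (\<lambda>_. count_space UNIV))
       (\<lambda>_. count_space UNIV)"

definition nat_limsup :: "(nat \<Rightarrow> nat) \<Rightarrow> nat" where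
  "nat_limsup f = (LEAST b. eventually (\<lambda>j. f j \<le> b) sequentially)"

definition Parity :: "('v \<Rightarrow> nat) \<Rightarrow> (nat \<Rightarrow> 'v) set" where
  "Parity \<Omega> = {\<rho>. even (nat_limsup (\<lambda>j. \<Omega> (\<rho> j)))}"

definition prio_filter_prefix :: "('v \<Rightarrow> nat) \<Rightarrow> nat \<Rightarrow> (nat \<Rightarrow> 'v) \<Rightarrow> nat \<Rightarrow> nat list" where
  "prio_filter_prefix \<Omega> p \<rho> k = filter (\<lambda>q. p \<le> q) (map (\<lambda>j. \<Omega> (\<rho> j)) [0..<k])"

definition Unlucky :: "('v \<Rightarrow> nat) \<Rightarrow> nat \<Rightarrow> nat \<Rightarrow> (nat \<Rightarrow> 'v) set" where
  "Unlucky \<Omega> p N = {\<rho>. \<exists>k. N \<le> length (prio_filter_prefix \<Omega> p \<rho> k) \<and>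
                          take N (prio_filter_prefix \<Omega> p \<rho> k) = replicate N p}"

end

theory Submission
  imports Defs
begin

definition Kp :: "'v set \<Rightarrow> ('v \<Rightarrow> 'v pmf) \<Rightarrow> ('v list \<Rightarrow> 'v) \<Rightarrow> 'v \<Rightarrow> 'v list \<Rightarrow> 'v pmf" where
 "Kp V1 \<delta> \<sigma> v h = (if h = [] then return_pmf v else if last h \<in> V1 then return_pmf (\<sigma> h) else \<delta> (last h))"

lemma step_kernel_Kp: "step_kernel V1 \<delta> \<sigma> v i \<omega> = measure_pmf (Kp V1 \<delta> \<sigma> v (map \<omega> [0..<i]))"
  unfolding step_kernel_def Kp_def Let_def by auto

lemma measurable_map_prefix:
  "{0..<n} \<subseteq> J \<Longrightarrow> (\<lambda>\<omega>. map \<omega> [0..<n]) \<in> measurable (PiM J (\<lambda>_. count_space (UNIV::'v::countable set))) (count_space UNIV)"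
proof (induction n)
  case 0
  then show ?case by simp
next
  case (Suc n)
  have m: "(\<lambda>x. i @ [x n]) \<in> measurable (PiM J (\<lambda>_. count_space (UNIV::'v set))) (count_space UNIV)" for i :: "'v list"
  proof -
    have "(\<lambda>x. x n) \<in> measurable (PiM J (\<lambda>_. count_space (UNIV::'v set))) (count_space UNIV)"
      using Suc.prems by (intro measurable_component_singleton) auto
    then show ?thesis by (rule measurable_compose[where f="\<lambda>x. x n"]) simp
  qed
  have "(\<lambda>\<omega>. (\<lambda>i x. i @ [x n]) (map \<omega> [0..<n]) \<omega>) \<in> measurable (PiM J (\<lambda>_. count_space (UNIV::'v set))) (count_space UNIV)"
    by (rule measurable_compose_countable[OF m Suc.IH]) (use Suc.prems in auto)
  then show ?case by simp
qed

lemma IT_interp: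
  fixes \<delta> :: "'v::finite \<Rightarrow> 'v pmf"
  shows "Ionescu_Tulcea (step_kernel V1 \<delta> \<sigma> v) (\<lambda>_. count_space UNIV)"
proof (rule Ionescu_Tulcea.intro)
  fix i
  have "(\<lambda>\<omega>. (\<lambda>h. measure_pmf (Kp V1 \<delta> \<sigma> v h)) (map \<omega> [0..<i])) \<in> measurable (PiM {0..<i} (\<lambda>_. count_space (UNIV::'v set))) (subprob_algebra (count_space UNIV))"
    by (rule measurable_compose[OF measurable_map_prefix]) (auto simp: measurable_count_space_eq1 measure_pmf_in_subprob_algebra)
  then show "step_kernel V1 \<delta> \<sigma> v i \<in> measurable (PiM {0..<i} (\<lambda>_. count_space UNIV)) (subprob_algebra (count_space UNIV))"
    by (simp add: step_kernel_Kp[abs_def])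
qed (simp add: step_kernel_Kp prob_space_measure_pmf)

primrec fut :: "'v set \<Rightarrow> ('v \<Rightarrow> 'v pmf) \<Rightarrow> ('v list \<Rightarrow> 'v) \<Rightarrow> 'v \<Rightarrow> 'v list \<Rightarrow> nat \<Rightarrow> 'v list pmf" where
  "fut V1 \<delta> \<sigma> v h 0 = return_pmf []"
| "fut V1 \<delta> \<sigma> v h (Suc l) = Kp V1 \<delta> \<sigma> v h \<bind> (\<lambda>x. map_pmf (Cons x) (fut V1 \<delta> \<sigma> v (h @ [x]) l))"

definition ext where "ext V1 \<delta> \<sigma> v h l = map_pmf (append h) (fut V1 \<delta> \<sigma> v h l)"

lemma ext_0: "ext V1 \<delta> \<sigma> v h 0 = return_pmf h"
  by (simp add: ext_def)

lemma ext_Suc: "ext V1 \<delta> \<sigma> v h (Suc l) = Kp V1 \<delta> \<sigma> v h \<bind> (\<lambda>x. ext V1 \<delta> \<sigma> v (h @ [x]) l)"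
  unfolding ext_def by (auto simp: map_bind_pmf pmf.map_comp comp_def intro!: bind_pmf_cong pmf.map_cong)

lemma link_C:
  fixes \<delta> :: "'v::finite \<Rightarrow> 'v pmf"
  shows "\<omega> \<in> space (PiM {0..<n} (\<lambda>_. count_space UNIV)) \<Longrightarrow>
    distr (Ionescu_Tulcea.C (step_kernel V1 \<delta> \<sigma> v) (\<lambda>_. count_space UNIV) n l \<omega>) (count_space UNIV) (\<lambda>\<omega>'. map \<omega>' [0..<n+l])
    = measure_pmf (ext V1 \<delta> \<sigma> v (map \<omega> [0..<n]) l)"
proof -
  interpret IT: Ionescu_Tulcea "step_kernel V1 \<delta> \<sigma> v" "\<lambda>_. count_space UNIV"
    by (rule IT_interp)
  let ?M = "\<lambda>_::nat. count_space (UNIV::'v set)"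
  show "\<omega> \<in> space (PiM {0..<n} ?M) \<Longrightarrow> distr (IT.C n l \<omega>) (count_space UNIV) (\<lambda>\<omega>'. map \<omega>' [0..<n+l])
    = measure_pmf (ext V1 \<delta> \<sigma> v (map \<omega> [0..<n]) l)"
  proof (induction l arbitrary: n \<omega>)
    case 0
    then show ?case
      by (simp add: ext_0 distr_return measurable_map_prefix return_pmf.rep_eq)
  next
    case (Suc l)
    have C1: "IT.C n 1 \<omega> = IT.eP n \<omega>"
      using Suc.prems by (simp add: bind_return[OF IT.measurable_eP])
    have eq: "IT.C n (Suc l) \<omega> = IT.eP n \<omega> \<bind> IT.C (Suc n) l"
      using IT.split_C[OF Suc.prems, of 1 l] C1 by (simp del: IT.C.simps)
    have "distr (IT.C n (Suc l) \<omega>) (count_space UNIV) (\<lambda>\<omega>'. map \<omega>' [0..<n+Suc l])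
       = IT.eP n \<omega> \<bind> (\<lambda>\<omega>'. distr (IT.C (Suc n) l \<omega>') (count_space UNIV) (\<lambda>\<omega>'. map \<omega>' [0..<n+Suc l]))"
      unfolding eq
      apply (rule distr_bind)
        apply (subst measurable_cong_sets[OF IT.sets_eP[OF Suc.prems] refl])
        apply (rule IT.measurable_C)
      using IT.prob_space_eP[OF Suc.prems] prob_space.not_empty apply blast
      apply (rule measurable_map_prefix) apply simp
      done
    also have "\<dots> = IT.eP n \<omega> \<bind> (\<lambda>\<omega>'. measure_pmf (ext V1 \<delta> \<sigma> v (map \<omega>' [0..<Suc n]) l))"
      apply (rule bind_cong[OF refl])
      using Suc.IH[of _ "Suc n"] IT.space_eP[OF Suc.prems] by simp
    also have "\<dots> = step_kernel V1 \<delta> \<sigma> v n \<omega> \<bind> (\<lambda>x. measure_pmf (ext V1 \<delta> \<sigma> v (map (fun_upd \<omega> n x) [0..<Suc n]) l))"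
      unfolding IT.eP_def
      apply (rule bind_distr[where K="count_space UNIV"])
        apply (simp add: step_kernel_Kp)
      subgoal using Suc.prems by (auto simp: space_PiM PiE_iff extensional_def)
       apply (rule measurable_compose[OF measurable_map_prefix]) apply simp
       apply (simp add: measure_pmf_in_subprob_algebra Pi_iff)
      apply (simp add: step_kernel_Kp)
      done
    also have "\<dots> = measure_pmf (ext V1 \<delta> \<sigma> v (map \<omega> [0..<n]) (Suc l))"
      by (simp add: ext_Suc measure_pmf_bind step_kernel_Kp)
    finally show ?case .
  qed
qed

lemma play_distr:
  fixes \<delta> :: "'v::finite \<Rightarrow> 'v pmf"
  shows "distr (play_measure V1 \<delta> \<sigma> v) (count_space UNIV) (\<lambda>\<rho>. map \<rho> [0..<n])
     = measure_pmf (ext V1 \<delta> \<sigma> v [] n)"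
proof -
  interpret IT: Ionescu_Tulcea "step_kernel V1 \<delta> \<sigma> v" "\<lambda>_. count_space UNIV"
    by (rule IT_interp)
  have pm: "play_measure V1 \<delta> \<sigma> v = IT.PF.lim"
    unfolding play_measure_def by simp
  have up: "IT.up_to {0..<n} = n"
  proof -
    have a: "IT.up_to {0..<n} \<le> m \<longleftrightarrow> n \<le> m" for m
      using IT.up_to_iff_Ico[of "{0..<n}" m] by auto
    show ?thesis using a[of n] a[of "IT.up_to {0..<n}"] by simp
  qed
  have "distr IT.PF.lim (count_space UNIV) (\<lambda>\<rho>. map \<rho> [0..<n])
      = distr (distr IT.PF.lim (PiM {0..<n} (\<lambda>_. count_space UNIV)) (\<lambda>x. restrict x {0..<n})) (count_space UNIV) (\<lambda>\<rho>. map \<rho> [0..<n])"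
    apply (subst distr_distr)
      apply (rule measurable_map_prefix) apply simp
     apply (subst measurable_cong_sets[OF IT.PF.sets_lim refl])
     apply (rule measurable_restrict) apply simp
    apply (auto simp: comp_def intro!: distr_cong map_cong)
    done
  also have "\<dots> = distr (IT.CI {0..<n}) (count_space UNIV) (\<lambda>\<rho>. map \<rho> [0..<n])"
    by (simp add: IT.distr_lim)
  also have "\<dots> = distr (IT.C 0 n (\<lambda>x. undefined)) (count_space UNIV) (\<lambda>\<rho>. map \<rho> [0..<n])"
    unfolding IT.CI_def up
    apply (subst distr_distr)
      apply (rule measurable_map_prefix) apply simp
     apply (subst measurable_cong_sets[OF IT.sets_C refl]) apply (simp add: space_PiM)
     apply (rule measurable_restrict) apply simp
    apply (auto simp: comp_def intro!: distr_cong map_cong)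
    done
  also have "\<dots> = measure_pmf (ext V1 \<delta> \<sigma> v [] n)"
    using link_C[of "\<lambda>x. undefined" 0 V1 \<delta> \<sigma> v n] by (simp add: space_PiM)
  finally show ?thesis using pm by simp
qed

lemma play_prob:
  fixes \<delta> :: "'v::finite \<Rightarrow> 'v pmf"
  shows "measure (play_measure V1 \<delta> \<sigma> v) {\<rho>. Q (map \<rho> [0..<n])} = measure_pmf.prob (ext V1 \<delta> \<sigma> v [] n) {xs. Q xs}"
proof -
  interpret IT: Ionescu_Tulcea "step_kernel V1 \<delta> \<sigma> v" "\<lambda>_. count_space UNIV"
    by (rule IT_interp)
  have sp: "space (play_measure V1 \<delta> \<sigma> v) = UNIV"
    unfolding play_measure_def by (simp add: space_PiM)
  have meas: "(\<lambda>\<rho>. map \<rho> [0..<n]) \<in> measurable (play_measure V1 \<delta> \<sigma> v) (count_space UNIV)"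
    unfolding play_measure_def
    apply (subst measurable_cong_sets[OF IT.PF.sets_lim refl])
    by (rule measurable_map_prefix) simp
  show ?thesis
    unfolding play_distr[symmetric, of V1 \<delta> \<sigma> v n]
    using meas by (subst measure_distr) (auto simp: sp)
qed

lemma play_sets:
  fixes \<delta> :: "'v::finite \<Rightarrow> 'v pmf"
  shows "{\<rho>. Q (map \<rho> [0..<n])} \<in> sets (play_measure V1 \<delta> \<sigma> v)"
proof -
  interpret IT: Ionescu_Tulcea "step_kernel V1 \<delta> \<sigma> v" "\<lambda>_. count_space UNIV"
    by (rule IT_interp)
  have sp: "space (play_measure V1 \<delta> \<sigma> v) = UNIV"
    unfolding play_measure_def by (simp add: space_PiM)
  have meas: "(\<lambda>\<rho>. map \<rho> [0..<n]) \<in> measurable (play_measure V1 \<delta> \<sigma> v) (count_space UNIV)"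
    unfolding play_measure_def
    apply (subst measurable_cong_sets[OF IT.PF.sets_lim refl])
    by (rule measurable_map_prefix) simp
  have "(\<lambda>\<rho>. map \<rho> [0..<n]) -` {xs. Q xs} \<inter> space (play_measure V1 \<delta> \<sigma> v) \<in> sets (play_measure V1 \<delta> \<sigma> v)"
    by (rule measurable_sets[OF meas]) simp
  then show ?thesis by (simp add: sp)
qed

lemma play_prob_space:
  fixes \<delta> :: "'v::finite \<Rightarrow> 'v pmf"
  shows "prob_space (play_measure V1 \<delta> \<sigma> v)"
proof -
  interpret IT: Ionescu_Tulcea "step_kernel V1 \<delta> \<sigma> v" "\<lambda>_. count_space UNIV"
    by (rule IT_interp)
  have sp: "space (play_measure V1 \<delta> \<sigma> v) = UNIV"
    unfolding play_measure_def by (simp add: space_PiM)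
  have meas: "(\<lambda>\<rho>. map \<rho> [0..<0]) \<in> measurable (play_measure V1 \<delta> \<sigma> v) (count_space UNIV)"
    by simp
  have "emeasure (distr (play_measure V1 \<delta> \<sigma> v) (count_space UNIV) (\<lambda>\<rho>. map \<rho> [0..<0])) UNIV = 1"
    unfolding play_distr by (simp add: measure_pmf.emeasure_space_1[simplified])
  then have "emeasure (play_measure V1 \<delta> \<sigma> v) (space (play_measure V1 \<delta> \<sigma> v)) = 1"
    using meas by (subst (asm) emeasure_distr) (auto simp: sp)
  then show ?thesis by (rule prob_spaceI)
qed

lemma prob_bind_finite:
  fixes M :: "'a::finite pmf"
  shows "measure_pmf.prob (bind_pmf M N) X = (\<Sum>x\<in>UNIV. pmf M x * measure_pmf.prob (N x) X)"
proof -
  have "emeasure (measure_pmf (bind_pmf M N)) X = (\<integral>\<^sup>+x. emeasure (N x) X \<partial>M)" by simp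
  also have "\<dots> = (\<Sum>x\<in>set_pmf M. emeasure (N x) X * pmf M x)"
    by (rule nn_integral_measure_pmf_finite) auto
  also have "\<dots> = (\<Sum>x\<in>UNIV. ennreal (pmf M x * measure_pmf.prob (N x) X))"
    apply (rule sum.mono_neutral_cong_left)
       apply (auto simp: measure_pmf.emeasure_eq_measure set_pmf_eq ennreal_mult mult.commute)
    done
  also have "\<dots> = ennreal (\<Sum>x\<in>UNIV. pmf M x * measure_pmf.prob (N x) X)"
    by (rule sum_ennreal) simp
  finally show ?thesis
    by (simp add: measure_pmf.emeasure_eq_measure sum_nonneg)
qed

fun goodR :: "('v \<Rightarrow> nat) \<Rightarrow> nat \<Rightarrow> nat \<Rightarrow> 'v list \<Rightarrow> bool" where
  "goodR \<Omega> p 0 xs = True"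
| "goodR \<Omega> p (Suc N) [] = False"
| "goodR \<Omega> p (Suc N) (x # xs) = (if p < \<Omega> x then False else if \<Omega> x = p then goodR \<Omega> p N xs else goodR \<Omega> p (Suc N) xs)"

lemma goodR_iff:
  "(N \<le> length (filter (\<lambda>q. p \<le> q) (map \<Omega> xs)) \<and> take N (filter (\<lambda>q. p \<le> q) (map \<Omega> xs)) = replicate N p)
   \<longleftrightarrow> goodR \<Omega> p N xs"
proof (induction xs arbitrary: N)
  case Nil
  then show ?case by (cases N) auto
next
  case (Cons x xs)
  show ?case
  proof (cases N)
    case 0 then show ?thesis by simp
  next
    case (Suc M)
    then show ?thesis using Cons.IH[of M] Cons.IH[of N]
      by (cases "p < \<Omega> x"; cases "\<Omega> x = p") auto
  qed
qed

lemma goodR_append: "goodR \<Omega> p N xs \<Longrightarrow> goodR \<Omega> p N (xs @ ys)"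
  by (induction \<Omega> p N xs rule: goodR.induct) (auto split: if_splits)

lemma Unlucky_goodR: "Unlucky \<Omega> p N = (\<Union>k. {\<rho>. goodR \<Omega> p N (map \<rho> [0..<k])})"
proof -
  have eq: "prio_filter_prefix \<Omega> p \<rho> k = filter (\<lambda>q. p \<le> q) (map \<Omega> (map \<rho> [0..<k]))" for \<rho> k
    by (simp add: prio_filter_prefix_def comp_def)
  show ?thesis
    unfolding Unlucky_def eq goodR_iff by auto
qed

lemma goodR_mono_k: "k \<le> k' \<Longrightarrow> goodR \<Omega> p N (map \<rho> [0..<k]) \<Longrightarrow> goodR \<Omega> p N (map \<rho> [0..<k'])"
proof -
  assume "k \<le> k'" "goodR \<Omega> p N (map \<rho> [0..<k])"
  moreover have "map \<rho> [0..<k'] = map \<rho> [0..<k] @ map \<rho> [k..<k']"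
    using \<open>k \<le> k'\<close> by (metis map_append upt_add_eq_append zero_le le_add_diff_inverse)
  ultimately show ?thesis using goodR_append by metis
qed

lemma tendsto_Max_insert:
  fixes f :: "nat \<Rightarrow> 'a \<Rightarrow> real"
  assumes "finite A" "\<And>x. x \<in> A \<Longrightarrow> (\<lambda>N. f N x) \<longlonglongrightarrow> l x"
  shows "(\<lambda>N. Max (insert c ((\<lambda>x. f N x) ` A))) \<longlonglongrightarrow> Max (insert c (l ` A))"
  using assms
proof (induction A rule: finite_induct)
  case empty
  then show ?case by simp
next
  case (insert a A)
  have eq: "Max (insert c (g ` insert a A)) = max (g a) (Max (insert c (g ` A)))" for g :: "'a \<Rightarrow> real"
  proof -
    have "insert c (g ` insert a A) = insert (g a) (insert c (g ` A))" by auto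
    then show ?thesis using insert.hyps by simp
  qed
  show ?case unfolding eq
    by (intro tendsto_max insert.prems insert.IH) auto
qed

lemma tendsto_Max_ne:
  fixes f :: "nat \<Rightarrow> 'a \<Rightarrow> real"
  assumes "finite A" "A \<noteq> {}" "\<And>x. x \<in> A \<Longrightarrow> (\<lambda>N. f N x) \<longlonglongrightarrow> l x"
  shows "(\<lambda>N. Max ((\<lambda>x. f N x) ` A)) \<longlonglongrightarrow> Max (l ` A)"
  using assms(1,2,3)
proof (induction A rule: finite_ne_induct)
  case (singleton x)
  then show ?case by simp
next
  case (insert a A)
  have eq: "Max (g ` insert a A) = max (g a) (Max (g ` A))" for g :: "'a \<Rightarrow> real"
    using insert.hyps by simp
  show ?case unfolding eq
    by (intro tendsto_max insert.prems insert.IH) auto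
qed

lemma sum_pmf_mult_le:
  fixes q :: "'a::finite pmf"
  assumes "\<And>x. x \<in> set_pmf q \<Longrightarrow> f x \<le> g x"
  shows "(\<Sum>x\<in>UNIV. pmf q x * f x) \<le> (\<Sum>x\<in>UNIV. pmf q x * g x)"
  apply (rule sum_mono)
  subgoal for x using assms[of x] by (cases "x \<in> set_pmf q") (auto simp: set_pmf_iff intro!: mult_left_mono)
  done

lemma sum_pmf_const:
  fixes q :: "'a::finite pmf"
  shows "(\<Sum>x\<in>UNIV. pmf q x * c) = c"
  by (simp add: sum_distrib_right[symmetric] sum_pmf_eq_1)

lemma sum_pmf_le_const:
  fixes q :: "'a::finite pmf"
  assumes "\<And>x. x \<in> set_pmf q \<Longrightarrow> f x \<le> c"
  shows "(\<Sum>x\<in>UNIV. pmf q x * f x) \<le> c"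
  using sum_pmf_mult_le[of q f "\<lambda>_. c", OF assms] sum_pmf_const[of q c] by simp

lemma sum_pmf_ge_const:
  fixes q :: "'a::finite pmf"
  assumes "\<And>x. x \<in> set_pmf q \<Longrightarrow> c \<le> f x"
  shows "c \<le> (\<Sum>x\<in>UNIV. pmf q x * f x)"
  using sum_pmf_mult_le[of q "\<lambda>_. c" f, OF assms] sum_pmf_const[of q c] by simp

lemma sum_pmf_return:
  fixes a :: "'a::finite"
  shows "(\<Sum>x\<in>UNIV. pmf (return_pmf a) x * f x) = f a"
proof -
  have "(\<Sum>x\<in>UNIV. pmf (return_pmf a) x * f x) = (\<Sum>x\<in>UNIV. (if x = a then f a else 0))"
    by (rule sum.cong) (auto simp: pmf_return)
  then show ?thesis by simp
qed

lemma sum_pmf_force: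
  fixes q :: "'a::finite pmf"
  assumes "c \<le> (\<Sum>x\<in>UNIV. pmf q x * f x)" "\<And>x. x \<in> set_pmf q \<Longrightarrow> f x \<le> c"
    and "x \<in> set_pmf q"
  shows "f x = c"
proof -
  have "(\<Sum>y\<in>UNIV. pmf q y * (c - f y)) = c - (\<Sum>x\<in>UNIV. pmf q x * f x)"
    by (simp add: right_diff_distrib sum_subtractf sum_pmf_const)
  also have "\<dots> \<le> 0" using assms(1) by simp
  finally have le: "(\<Sum>y\<in>UNIV. pmf q y * (c - f y)) \<le> 0" .
  have nn: "\<And>y. 0 \<le> pmf q y * (c - f y)"
    apply -
    subgoal for y using assms(2)[of y] by (cases "y \<in> set_pmf q") (auto simp: set_pmf_iff)
    done
  have "(\<Sum>y\<in>UNIV. pmf q y * (c - f y)) = 0" using le nn by (simp add: sum_nonneg antisym)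
  then have "pmf q x * (c - f x) = 0" using nn by (simp add: sum_nonneg_eq_0_iff)
  moreover have "pmf q x > 0" using assms(3) by (simp add: pmf_positive)
  ultimately show ?thesis by simp
qed

locale LL =
  fixes E :: "('v::finite \<times> 'v) set" and V1 :: "'v set" and \<delta> :: "'v \<Rightarrow> 'v pmf"
    and \<Omega> :: "'v \<Rightarrow> nat" and p :: nat
  assumes mdp: "mdp E V1 \<delta>"
begin

definition Bs where "Bs = {u. p < \<Omega> u}"
definition Ps where "Ps = {u. \<Omega> u = p}"
definition succ where "succ u = {w. (u, w) \<in> E}"

lemma succ_ne: "succ u \<noteq> {}"
  using mdp unfolding mdp_def succ_def by auto

lemma finite_succ[simp]: "finite (succ u)" by simp

lemma set_pmf_delta: "u \<notin> V1 \<Longrightarrow> set_pmf (\<delta> u) = succ u"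
  using mdp unfolding mdp_def succ_def by auto

definition opt :: "'v \<Rightarrow> ('v \<Rightarrow> real) \<Rightarrow> real" where
  "opt u f = (if u \<in> V1 then Max (f ` succ u) else (\<Sum>x\<in>UNIV. pmf (\<delta> u) x * f x))"

lemma opt_mono: "(\<And>x. x \<in> succ u \<Longrightarrow> f x \<le> g x) \<Longrightarrow> opt u f \<le> opt u g"
  unfolding opt_def
  apply (cases "u \<in> V1")
   apply simp
   apply (rule Max.boundedI)
     apply simp
    apply (simp add: succ_ne)
   apply clarsimp
   subgoal for x by (rule order_trans[OF _ Max_ge[of _ "g x"]]) auto
  apply simp
  apply (rule sum_pmf_mult_le) using set_pmf_delta by auto

lemma opt_const: "opt u (\<lambda>_. c) = c"
  unfolding opt_def using succ_ne by (auto simp: sum_pmf_const)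

lemma opt_le: "(\<And>x. x \<in> succ u \<Longrightarrow> f x \<le> c) \<Longrightarrow> opt u f \<le> c"
  using opt_mono[of u f "\<lambda>_. c"] opt_const by simp

lemma opt_ge: "(\<And>x. x \<in> succ u \<Longrightarrow> c \<le> f x) \<Longrightarrow> c \<le> opt u f"
  using opt_mono[of u "\<lambda>_. c" f] opt_const by simp

lemma tendsto_opt:
  "(\<And>x. (\<lambda>N. f N x) \<longlonglongrightarrow> l x) \<Longrightarrow> (\<lambda>N. opt u (f N)) \<longlonglongrightarrow> opt u l"
  unfolding opt_def
  apply (cases "u \<in> V1")
   apply simp
   apply (rule tendsto_Max_ne) using succ_ne apply auto[3]
  apply simp
  apply (intro tendsto_intros) by auto

definition psi :: "(nat \<Rightarrow> 'v \<Rightarrow> real) \<Rightarrow> nat \<Rightarrow> 'v \<Rightarrow> real" where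
  "psi F N x = (if N = 0 then 1 else if x \<in> Bs then 0 else if x \<in> Ps then F (N - 1) x else F N x)"

fun H :: "nat \<Rightarrow> nat \<Rightarrow> 'v \<Rightarrow> real" where
  "H 0 N u = (if N = 0 then 1 else 0)"
| "H (Suc k) N u = opt u (psi (H k) N)"

lemma H_bounds: "0 \<le> H k N u \<and> H k N u \<le> 1"
proof (induction k arbitrary: N u)
  case 0
  then show ?case by simp
next
  case (Suc k)
  show ?case
    using Suc.IH
    by (auto intro!: opt_le opt_ge simp: psi_def)
qed

lemma H_mono_k: "H k N u \<le> H (Suc k) N u"
proof (induction k arbitrary: N u)
  case 0
  show ?case
    using H_bounds[of 0] by (auto simp: psi_def opt_const intro!: opt_ge)
next
  case (Suc k)
  show ?case
    unfolding H.simps using Suc.IH by (auto intro!: opt_mono simp: psi_def)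
qed

lemma H_mono_k': "k \<le> k' \<Longrightarrow> H k N u \<le> H k' N u"
proof (induction rule: dec_induct)
  case (step n)
  then show ?case using H_mono_k[of n N u] by linarith
qed simp

lemma H_anti_N: "H k (Suc N) u \<le> H k N u"
proof (induction k arbitrary: N u)
  case 0
  show ?case by simp
next
  case (Suc k)
  show ?case
    unfolding H.simps
  proof (rule opt_mono)
    fix x
    show "psi (H k) (Suc N) x \<le> psi (H k) N x"
      using Suc.IH[of "N - 1" x] Suc.IH[of N x] H_bounds[of k]
      by (cases N) (auto simp: psi_def)
  qed
qed

definition Hinf :: "nat \<Rightarrow> 'v \<Rightarrow> real" where
  "Hinf N u = (SUP k. H k N u)"

lemma bdd_H: "bdd_above (range (\<lambda>k. H k N u))"
  by (rule bdd_aboveI[where M=1]) (use H_bounds in auto)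

lemma H_le_Hinf: "H k N u \<le> Hinf N u"
  unfolding Hinf_def by (rule cSUP_upper[OF _ bdd_H]) simp

lemma Hinf_bounds: "0 \<le> Hinf N u \<and> Hinf N u \<le> 1"
  using H_le_Hinf[of 0 N u] H_bounds[of 0 N u]
  by (auto simp: Hinf_def intro!: cSUP_least H_bounds[THEN conjunct2])

lemma Hinf_lim: "(\<lambda>k. H k N u) \<longlonglongrightarrow> Hinf N u"
  unfolding Hinf_def
  by (rule LIMSEQ_incseq_SUP[OF bdd_H]) (auto intro!: incseq_SucI H_mono_k)

lemma Hinf_anti: "Hinf (Suc N) u \<le> Hinf N u"
  unfolding Hinf_def
  by (rule cSUP_mono[OF _ bdd_H]) (auto intro: H_anti_N)

definition g :: "'v \<Rightarrow> real" where
  "g u = (INF N. Hinf N u)"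

lemma bdd_Hinf: "bdd_below (range (\<lambda>N. Hinf N u))"
  by (rule bdd_belowI[where m=0]) (use Hinf_bounds in auto)

lemma g_le_Hinf: "g u \<le> Hinf N u"
  unfolding g_def by (rule cINF_lower[OF bdd_Hinf]) simp

lemma g_bounds: "0 \<le> g u"
  unfolding g_def using Hinf_bounds by (auto intro!: cINF_greatest)

lemma g_lim: "(\<lambda>N. Hinf N u) \<longlonglongrightarrow> g u"
  unfolding g_def
  by (rule LIMSEQ_decseq_INF[OF bdd_Hinf]) (auto intro!: decseq_SucI Hinf_anti)

lemma Hinf_bellman: "Hinf (Suc N) u \<le> opt u (\<lambda>x. if x \<in> Bs then 0 else Hinf N x)"
  unfolding Hinf_def[of "Suc N"]
proof (rule cSUP_least)
  fix k
  show "H k (Suc N) u \<le> opt u (\<lambda>x. if x \<in> Bs then 0 else Hinf N x)"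
  proof (cases k)
    case 0
    then show ?thesis using Hinf_bounds by (auto intro!: opt_ge)
  next
    case (Suc k')
    show ?thesis unfolding Suc H.simps
      apply (rule opt_mono)
      using H_le_Hinf[of k' N] H_anti_N[of k' N] by (auto simp: psi_def intro: order_trans)
  qed
qed simp

definition gt where "gt x = (if x \<in> Bs then 0 else g x)"

lemma g_bellman: "g u \<le> opt u gt"
proof -
  have "(\<lambda>N. opt u (\<lambda>x. if x \<in> Bs then 0 else Hinf N x)) \<longlonglongrightarrow> opt u gt"
    unfolding gt_def by (rule tendsto_opt) (auto intro: g_lim)
  moreover have "\<forall>N. g u \<le> opt u (\<lambda>x. if x \<in> Bs then 0 else Hinf N x)"
    using g_le_Hinf Hinf_bellman order_trans by blast
  ultimately show ?thesis by (intro LIMSEQ_le_const) auto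
qed

end

context LL begin

lemma gt_nonneg: "0 \<le> gt x"
  unfolding gt_def using g_bounds by simp

definition EZ where "EZ Z = {(x, y). (x, y) \<in> E \<and> x \<in> Z \<and> y \<in> Z}"

lemma Z_structure:
  assumes pos: "\<exists>x. gt x > 0"
  shows "\<exists>Z. Z \<noteq> {} \<and> (\<forall>x\<in>Z. x \<notin> Bs) \<and> (\<forall>x\<in>Z. x \<notin> V1 \<longrightarrow> succ x \<subseteq> Z)
     \<and> (\<forall>x\<in>Z. x \<in> V1 \<longrightarrow> (\<exists>y\<in>succ x. y \<in> Z)) \<and> (\<forall>x\<in>Z. \<exists>w\<in>Ps. (x, w) \<in> (EZ Z)\<^sup>*)"
proof -
  define Mx where "Mx = Max (range gt)"
  have gt_le: "gt x \<le> Mx" for x unfolding Mx_def by (rule Max_ge) auto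
  obtain x1 where "gt x1 > 0" using pos by auto
  then have Mpos: "Mx > 0" using gt_le[of x1] by linarith
  define Z where "Z = {x. gt x = Mx}"
  have Zne: "Z \<noteq> {}"
  proof -
    have "Mx \<in> range gt" unfolding Mx_def by (rule Max_in) auto
    then show ?thesis unfolding Z_def by auto
  qed
  have Z1: "x \<notin> Bs \<and> g x = Mx" if "x \<in> Z" for x
    using that Mpos unfolding Z_def gt_def by (auto split: if_splits)
  have Z2: "succ x \<subseteq> Z" if "x \<in> Z" "x \<notin> V1" for x
  proof
    fix y assume y: "y \<in> succ x"
    have "Mx \<le> (\<Sum>z\<in>UNIV. pmf (\<delta> x) z * gt z)"
      using g_bellman[of x] Z1[OF that(1)] that(2) by (simp add: opt_def)
    then have "gt y = Mx"
      by (rule sum_pmf_force) (use y set_pmf_delta[OF that(2)] gt_le in auto)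
    then show "y \<in> Z" unfolding Z_def by simp
  qed
  have Z3: "\<exists>y\<in>succ x. y \<in> Z" if "x \<in> Z" "x \<in> V1" for x
  proof -
    have le: "Mx \<le> Max (gt ` succ x)"
      using g_bellman[of x] Z1[OF that(1)] that(2) by (simp add: opt_def)
    have "Max (gt ` succ x) \<in> gt ` succ x" by (rule Max_in) (auto simp: succ_ne)
    then obtain y where y: "y \<in> succ x" "gt y = Max (gt ` succ x)" by auto
    then have "gt y = Mx" using le gt_le[of y] by linarith
    then show ?thesis using y unfolding Z_def by auto
  qed
  define R where "R = {x. \<exists>w\<in>Ps. (x, w) \<in> (EZ Z)\<^sup>*}"
  have ZR: "Z \<subseteq> R"
  proof (rule ccontr)
    assume "\<not> Z \<subseteq> R"
    then obtain x0 where x0: "x0 \<in> Z" "x0 \<notin> R" by auto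
    define D where "D = Z - R"
    have DP: "y \<notin> Ps" if "y \<in> D" for y
      using that unfolding D_def R_def by auto
    have DS: "y \<in> D" if xD: "x \<in> D" and ys: "y \<in> succ x" and yZ: "y \<in> Z" for x y
    proof (rule ccontr)
      assume "y \<notin> D"
      with yZ have "y \<in> R" unfolding D_def by auto
      then obtain w where "w \<in> Ps" "(y, w) \<in> (EZ Z)\<^sup>*" unfolding R_def by auto
      moreover have "(x, y) \<in> EZ Z" using that unfolding EZ_def D_def succ_def by auto
      ultimately have "x \<in> R" unfolding R_def using converse_rtrancl_into_rtrancl by fastforce
      then show False using that(1) unfolding D_def by auto
    qed
    define b where "b N = Max (insert 0 ((\<lambda>x. if x \<in> Bs then 0 else Hinf N x) ` (- Z)))" for N
    have b_ge: "(if y \<in> Bs then 0 else Hinf N y) \<le> b N" if "y \<notin> Z" for y N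
      unfolding b_def by (rule Max_ge) (use that in auto)
    have b_ge0: "0 \<le> b N" for N
      unfolding b_def by (rule Max_ge) auto
    have Hb: "H k (Suc N) x \<le> b N" if "x \<in> D" for k N x
      using that
    proof (induction k arbitrary: x)
      case 0
      then show ?case using b_ge0 by simp
    next
      case (Suc k)
      show ?case unfolding H.simps
      proof (rule opt_le)
        fix y assume y: "y \<in> succ x"
        show "psi (H k) (Suc N) y \<le> b N"
        proof (cases "y \<in> Z")
          case True
          then have "y \<in> D" using DS Suc.prems y by blast
          then show ?thesis using Suc.IH[of y] DP[of y] Z1[OF True] by (simp add: psi_def)
        next
          case False
          have "psi (H k) (Suc N) y \<le> (if y \<in> Bs then 0 else Hinf N y)"
            using H_le_Hinf[of k N y] H_anti_N[of k N y] by (auto simp: psi_def)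
          then show ?thesis using b_ge[OF False, of N] by linarith
        qed
      qed
    qed
    have gb: "g x0 \<le> b N" for N
    proof -
      have "x0 \<in> D" using x0 unfolding D_def by auto
      then have "Hinf (Suc N) x0 \<le> b N"
        unfolding Hinf_def by (intro cSUP_least Hb) auto
      then show ?thesis using g_le_Hinf[of x0 "Suc N"] by linarith
    qed
    have blim: "b \<longlonglongrightarrow> Max (insert 0 (gt ` (- Z)))"
      unfolding b_def gt_def
      by (rule tendsto_Max_insert) (auto intro: g_lim)
    have "g x0 \<le> Max (insert 0 (gt ` (- Z)))"
      by (rule LIMSEQ_le_const[OF blim]) (use gb in auto)
    moreover have "Max (insert 0 (gt ` (- Z))) < Mx"
    proof -
      have "Max (insert 0 (gt ` (- Z))) \<in> insert 0 (gt ` (- Z))" by (rule Max_in) auto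
      then show ?thesis using Mpos gt_le unfolding Z_def
        by (auto simp: less_le)
    qed
    ultimately show False using Z1[OF x0(1)] by linarith
  qed
  show ?thesis
    apply (rule exI[of _ Z])
    using Zne Z1 Z2 Z3 ZR unfolding R_def by blast
qed

end

lemma history_snoc: "history E h \<Longrightarrow> (last h, y) \<in> E \<Longrightarrow> history E (h @ [y])"
  unfolding history_def
  apply (auto simp: nth_append)
  subgoal for i
    by (metis Suc_lessI last_conv_nth diff_Suc_1)
  done

context LL begin

definition R where "R \<sigma> v h k N = measure_pmf.prob (fut V1 \<delta> \<sigma> v h k) {ys. goodR \<Omega> p N ys}"

lemma R_0: "R \<sigma> v h 0 N = (if N = 0 then 1 else 0)"
  unfolding R_def by (cases N) auto

lemma R_bounds: "0 \<le> R \<sigma> v h k N \<and> R \<sigma> v h k N \<le> 1"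
  unfolding R_def by auto

lemma R_Suc: "R \<sigma> v h (Suc k) N = (\<Sum>y\<in>UNIV. pmf (Kp V1 \<delta> \<sigma> v h) y * psi (\<lambda>N' y. R \<sigma> v (h @ [y]) k N') N y)"
  unfolding R_def fut.simps prob_bind_finite measure_map_pmf
proof (rule sum.cong[OF refl])
  fix y
  have "measure_pmf.prob (fut V1 \<delta> \<sigma> v (h @ [y]) k) (Cons y -` {ys. goodR \<Omega> p N ys}) =
     psi (\<lambda>N' y. measure_pmf.prob (fut V1 \<delta> \<sigma> v (h @ [y]) k) {ys. goodR \<Omega> p N' ys}) N y"
  proof (cases N)
    case 0
    then show ?thesis by (simp add: psi_def)
  next
    case (Suc N')
    then show ?thesis
      by (auto simp: psi_def Bs_def Ps_def)
  qed
  then show "pmf (Kp V1 \<delta> \<sigma> v h) y * measure_pmf.prob (fut V1 \<delta> \<sigma> v (h @ [y]) k) (Cons y -` {ys. goodR \<Omega> p N ys}) =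
    pmf (Kp V1 \<delta> \<sigma> v h) y * psi (\<lambda>N' y. measure_pmf.prob (fut V1 \<delta> \<sigma> v (h @ [y]) k) {ys. goodR \<Omega> p N' ys}) N y"
    by simp
qed

lemma psi_mono: "(\<And>N'. F N' y \<le> G N' y) \<Longrightarrow> psi F N y \<le> psi G N y"
  unfolding psi_def by auto

lemma R_le_H:
  assumes \<sigma>: "strategy E V1 \<sigma>"
  shows "history E h \<Longrightarrow> R \<sigma> v h k N \<le> H k N (last h)"
proof (induction k arbitrary: h N)
  case 0
  then show ?case by (simp add: R_0)
next
  case (Suc k)
  have hne: "h \<noteq> []" using Suc.prems unfolding history_def by auto
  have sup: "y \<in> set_pmf (Kp V1 \<delta> \<sigma> v h) \<Longrightarrow> y \<in> succ (last h)" for y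
    using \<sigma> Suc.prems hne set_pmf_delta[of "last h"]
    unfolding Kp_def strategy_def succ_def by (auto split: if_splits)
  have "R \<sigma> v h (Suc k) N \<le> (\<Sum>y\<in>UNIV. pmf (Kp V1 \<delta> \<sigma> v h) y * psi (H k) N y)"
    unfolding R_Suc
  proof (rule sum_pmf_mult_le)
    fix y assume y: "y \<in> set_pmf (Kp V1 \<delta> \<sigma> v h)"
    have "history E (h @ [y])" using history_snoc[OF Suc.prems] sup[OF y] unfolding succ_def by auto
    then show "psi (\<lambda>N' y. R \<sigma> v (h @ [y]) k N') N y \<le> psi (H k) N y"
      using Suc.IH[of "h @ [y]"] by (intro psi_mono) auto
  qed
  also have "\<dots> \<le> opt (last h) (psi (H k) N)"
  proof (cases "last h \<in> V1")
    case True
    then have "Kp V1 \<delta> \<sigma> v h = return_pmf (\<sigma> h)" using hne by (simp add: Kp_def)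
    moreover have "\<sigma> h \<in> succ (last h)" using sup by (simp add: calculation)
    ultimately show ?thesis using True
      by (auto simp: sum_pmf_return opt_def intro!: Max_ge)
  next
    case False
    then show ?thesis using hne by (simp add: Kp_def opt_def)
  qed
  finally show ?case by simp
qed

end

lemma no_descent:
  fixes d :: "'a \<Rightarrow> nat"
  assumes "\<And>x. x \<in> S \<Longrightarrow> \<exists>y\<in>S. d y < d x"
  shows "S = {}"
proof -
  have "\<forall>x. d x = n \<longrightarrow> x \<notin> S" for n
  proof (induction n rule: less_induct)
    case (less n)
    then show ?case using assms by blast
  qed
  then show ?thesis by auto
qed

context LL begin

lemma Z_strategy:
  assumes Zne: "Z \<noteq> {}" and Z1: "\<forall>x\<in>Z. x \<notin> Bs" and Z2: "\<forall>x\<in>Z. x \<notin> V1 \<longrightarrow> succ x \<subseteq> Z"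
    and Z3: "\<forall>x\<in>Z. x \<in> V1 \<longrightarrow> (\<exists>y\<in>succ x. y \<in> Z)" and ZR: "\<forall>x\<in>Z. \<exists>w\<in>Ps. (x, w) \<in> (EZ Z)\<^sup>*"
  shows "\<exists>\<sigma> u0. strategy E V1 \<sigma> \<and> u0 \<in> Z \<and> (\<forall>N. (\<lambda>k. R \<sigma> u0 [u0] k N) \<longlonglongrightarrow> 1)"
proof -
  define d where "d x = (LEAST j. \<exists>w\<in>Ps. (x, w) \<in> (EZ Z) ^^ j)" for x
  have d_prop: "\<exists>y. (x, y) \<in> EZ Z \<and> d y < d x" if xZ: "x \<in> Z" and xP: "x \<notin> Ps" for x
  proof -
    obtain w0 where "w0 \<in> Ps" "(x, w0) \<in> (EZ Z)\<^sup>*" using ZR xZ by auto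
    then obtain j0 where "(x, w0) \<in> (EZ Z) ^^ j0" using rtrancl_power by blast
    then have ex: "\<exists>j. \<exists>w\<in>Ps. (x, w) \<in> (EZ Z) ^^ j" using \<open>w0 \<in> Ps\<close> by auto
    obtain w where w: "w \<in> Ps" "(x, w) \<in> (EZ Z) ^^ (d x)"
      using LeastI_ex[OF ex] unfolding d_def by auto
    show ?thesis
    proof (cases "d x")
      case 0
      then show ?thesis using w xP by auto
    next
      case (Suc i)
      then obtain y where y: "(x, y) \<in> EZ Z" "(y, w) \<in> (EZ Z) ^^ i"
        using w relpow_Suc_D2 by metis
      have "d y \<le> i" unfolding d_def by (rule Least_le) (use y w in auto)
      then show ?thesis using y Suc by auto
    qed
  qed
  have EZ_succ: "(x, y) \<in> EZ Z \<Longrightarrow> y \<in> succ x \<and> y \<in> Z" for x y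
    unfolding EZ_def succ_def by auto
  define ch where "ch x = (if x \<in> Z then (SOME y. y \<in> succ x \<and> y \<in> Z \<and> (x \<notin> Ps \<longrightarrow> d y < d x))
      else (SOME y. y \<in> succ x))" for x
  have ch_ex: "\<exists>y. y \<in> succ x \<and> y \<in> Z \<and> (x \<notin> Ps \<longrightarrow> d y < d x)" if "x \<in> Z" for x
  proof (cases "x \<in> Ps")
    case True
    show ?thesis
    proof (cases "x \<in> V1")
      case True
      then show ?thesis using Z3 \<open>x \<in> Z\<close> \<open>x \<in> Ps\<close> by auto
    next
      case False
      then show ?thesis using Z2 \<open>x \<in> Z\<close> \<open>x \<in> Ps\<close> succ_ne[of x] by blast
    qed
  next
    case False
    then show ?thesis using d_prop[OF that False] EZ_succ by blast
  qed
  have ch1: "ch x \<in> succ x" for x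
  proof (cases "x \<in> Z")
    case True
    then show ?thesis unfolding ch_def using someI_ex[OF ch_ex[OF True]] by auto
  next
    case False
    then show ?thesis unfolding ch_def using someI_ex[of "\<lambda>y. y \<in> succ x"] succ_ne[of x] by auto
  qed
  have ch2: "ch x \<in> Z \<and> (x \<notin> Ps \<longrightarrow> d (ch x) < d x)" if "x \<in> Z" for x
    unfolding ch_def using someI_ex[OF ch_ex[OF that]] that by auto
  define \<sigma> where "\<sigma> h = ch (last h)" for h :: "'v list"
  have strat: "strategy E V1 \<sigma>"
    unfolding strategy_def \<sigma>_def using ch1 unfolding succ_def by auto
  obtain u0 where u0: "u0 \<in> Z" using Zne by auto
  define T where "T x = Kp V1 \<delta> \<sigma> u0 [x]" for x
  have Kp_last: "Kp V1 \<delta> \<sigma> u0 h = T (last h)" if "h \<noteq> []" for h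
    using that unfolding T_def Kp_def \<sigma>_def by simp
  have fut_last: "fut V1 \<delta> \<sigma> u0 h k = fut V1 \<delta> \<sigma> u0 [last h] k" if "h \<noteq> []" for h k
    using that
  proof (induction k arbitrary: h)
    case 0
    then show ?case by simp
  next
    case (Suc k)
    have "fut V1 \<delta> \<sigma> u0 h (Suc k) = T (last h) \<bind> (\<lambda>x. map_pmf (Cons x) (fut V1 \<delta> \<sigma> u0 [x] k))"
      using Suc.IH[of "h @ [_]"] Kp_last[OF Suc.prems] by simp
    moreover have "fut V1 \<delta> \<sigma> u0 [last h] (Suc k) = T (last h) \<bind> (\<lambda>x. map_pmf (Cons x) (fut V1 \<delta> \<sigma> u0 [x] k))"
      using Suc.IH[of "[last h] @ [_]"] Kp_last[of "[last h]"] by simp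
    ultimately show ?case by simp
  qed
  define r where "r k N x = R \<sigma> u0 [x] k N" for k N x
  have r_Suc: "r (Suc k) N x = (\<Sum>y\<in>UNIV. pmf (T x) y * psi (\<lambda>N' y. r k N' y) N y)" for k N x
  proof -
    have "R \<sigma> u0 ([x] @ [y]) k N' = r k N' y" for y N'
      unfolding r_def R_def using fut_last[of "[x] @ [y]" k] by simp
    then show ?thesis unfolding r_def R_Suc T_def by simp
  qed
  have r_0: "r 0 N x = (if N = 0 then 1 else 0)" for N x
    unfolding r_def by (simp add: R_0)
  have r_b: "0 \<le> r k N x \<and> r k N x \<le> 1" for k N x
    unfolding r_def by (rule R_bounds)
  have T_Z: "set_pmf (T x) \<subseteq> Z" if "x \<in> Z" for x
    using that ch2[OF that] Z2 set_pmf_delta[of x]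
    unfolding T_def Kp_def \<sigma>_def by (auto split: if_splits)
  have T_desc: "\<exists>y\<in>set_pmf (T x). d y < d x" if xZ: "x \<in> Z" and xP: "x \<notin> Ps" for x
  proof (cases "x \<in> V1")
    case True
    then show ?thesis using ch2[OF that(1)] that unfolding T_def Kp_def \<sigma>_def by auto
  next
    case False
    obtain y where "(x, y) \<in> EZ Z" "d y < d x" using d_prop[OF xZ xP] by auto
    then show ?thesis using False set_pmf_delta[of x] EZ_succ unfolding T_def Kp_def \<sigma>_def by auto
  qed
  have r_mono: "r k N x \<le> r (Suc k) N x" for k N x
  proof (induction k arbitrary: N x)
    case 0
    show ?case
    proof (cases N)
      case 0
      then show ?thesis unfolding r_Suc by (simp add: r_0 psi_def sum_pmf_eq_1)
    next
      case (Suc N')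
      have "0 \<le> r (Suc 0) N x" using r_b by blast
      then show ?thesis using Suc by (simp add: r_0)
    qed
  next
    case (Suc k)
    have e1: "r (Suc (Suc k)) N x = (\<Sum>y\<in>UNIV. pmf (T x) y * psi (\<lambda>N' y. r (Suc k) N' y) N y)"
      by (rule r_Suc)
    have e2: "r (Suc k) N x = (\<Sum>y\<in>UNIV. pmf (T x) y * psi (\<lambda>N' y. r k N' y) N y)"
      by (rule r_Suc)
    show ?case
      unfolding e1 e2
      by (rule sum_pmf_mult_le, rule psi_mono) (rule Suc.IH)
  qed
  define rinf where "rinf N x = (SUP k. r k N x)" for N x
  have bdd_r: "bdd_above (range (\<lambda>k. r k N x))" for N x
    by (rule bdd_aboveI[where M=1]) (use r_b in auto)
  have r_lim: "(\<lambda>k. r k N x) \<longlonglongrightarrow> rinf N x" for N x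
    unfolding rinf_def by (rule LIMSEQ_incseq_SUP[OF bdd_r]) (auto intro!: incseq_SucI r_mono)
  have r_le: "r k N x \<le> rinf N x" for k N x
    unfolding rinf_def by (rule cSUP_upper[OF _ bdd_r]) simp
  have rinf_le1: "rinf N x \<le> 1" for N x
    unfolding rinf_def using r_b by (auto intro!: cSUP_least)
  have rinf_ge: "(\<Sum>y\<in>UNIV. pmf (T x) y * psi rinf N y) \<le> rinf N x" for N x
  proof (rule LIMSEQ_le_const2)
    show "(\<lambda>k. \<Sum>y\<in>UNIV. pmf (T x) y * psi (\<lambda>N' y. r k N' y) N y) \<longlonglongrightarrow> (\<Sum>y\<in>UNIV. pmf (T x) y * psi rinf N y)"
    proof (intro tendsto_intros)
      fix y
      show "(\<lambda>k. psi (\<lambda>N' y. r k N' y) N y) \<longlonglongrightarrow> psi rinf N y"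
        by (cases "N = 0"; cases "y \<in> Bs"; cases "y \<in> Ps") (simp_all add: psi_def r_lim)
    qed
    show "\<exists>K. \<forall>k\<ge>K. (\<Sum>y\<in>UNIV. pmf (T x) y * psi (\<lambda>N' y. r k N' y) N y) \<le> rinf N x"
      using r_Suc r_le by (metis order_refl)
  qed
  have all1: "\<forall>x\<in>Z. rinf N x = 1" for N
  proof (induction N)
    case 0
    have U: "Collect (goodR \<Omega> p 0) = UNIV" by auto
    have "r k 0 x = 1" for k x unfolding r_def R_def U by simp
    then show ?case unfolding rinf_def by simp
  next
    case (Suc N)
    define F where "F x = 1 - rinf (Suc N) x" for x
    have F_nn: "0 \<le> F x" for x unfolding F_def using rinf_le1 by simp
    have F_le: "F x \<le> (\<Sum>y\<in>UNIV. pmf (T x) y * (if y \<in> Ps then 0 else F y))" if "x \<in> Z" for x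
    proof -
      have eq: "(\<Sum>y\<in>UNIV. pmf (T x) y * psi rinf (Suc N) y) = (\<Sum>y\<in>UNIV. pmf (T x) y * (1 - (if y \<in> Ps then 0 else F y)))"
      proof (rule sum.cong[OF refl])
        fix y
        show "pmf (T x) y * psi rinf (Suc N) y = pmf (T x) y * (1 - (if y \<in> Ps then 0 else F y))"
        proof (cases "y \<in> set_pmf (T x)")
          case True
          then have "y \<in> Z" using T_Z[OF that] by auto
          then show ?thesis using Suc.IH Z1 by (simp add: psi_def F_def)
        next
          case False
          then show ?thesis by (simp add: set_pmf_iff)
        qed
      qed
      have "(\<Sum>y\<in>UNIV. pmf (T x) y * (1 - (if y \<in> Ps then 0 else F y))) =
          1 - (\<Sum>y\<in>UNIV. pmf (T x) y * (if y \<in> Ps then 0 else F y))"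
        by (simp add: right_diff_distrib sum_subtractf sum_pmf_const[where c=1, simplified])
      then show ?thesis using rinf_ge[of x "Suc N"] eq unfolding F_def by linarith
    qed
    show ?case
    proof (rule ccontr)
      assume "\<not> (\<forall>x\<in>Z. rinf (Suc N) x = 1)"
      then obtain x1 where x1: "x1 \<in> Z" "F x1 > 0" using rinf_le1 unfolding F_def
        by (metis diff_gt_0_iff_gt order_less_le)
      define c where "c = Max (F ` Z)"
      have c_ge: "F x \<le> c" if "x \<in> Z" for x unfolding c_def using that by (intro Max_ge) auto
      have c_pos: "c > 0" using c_ge[OF x1(1)] x1(2) by linarith
      have "c \<in> F ` Z" unfolding c_def using Zne by (intro Max_in) auto
      then obtain x2 where x2: "x2 \<in> Z" "F x2 = c" by auto
      define Y where "Y = {x \<in> Z. F x = c}"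
      have Yclosed: "y \<in> Y - Ps" if "x \<in> Y" "y \<in> set_pmf (T x)" for x y
      proof -
        have xZ: "x \<in> Z" using that Y_def by auto
        have "(if y \<in> Ps then 0 else F y) = c"
          apply (rule sum_pmf_force[of c "T x"])
          using F_le[OF xZ] that(1) unfolding Y_def apply simp
          subgoal for z using T_Z[OF xZ] c_ge[of z] c_pos by auto
          by (rule that(2))
        then show ?thesis using c_pos T_Z[OF xZ] that(2) unfolding Y_def by (auto split: if_splits)
      qed
      have "Y - Ps = {}"
      proof (rule no_descent[where d=d])
        fix x assume x: "x \<in> Y - Ps"
        then obtain y where "y \<in> set_pmf (T x)" "d y < d x" using T_desc[of x] unfolding Y_def by auto
        then show "\<exists>y\<in>Y - Ps. d y < d x" using Yclosed[of x y] x by auto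
      qed
      moreover obtain y where "y \<in> set_pmf (T x2)" using set_pmf_not_empty[of "T x2"] by auto
      ultimately show False using Yclosed[of x2 y] x2 unfolding Y_def by auto
    qed
  qed
  show ?thesis
  proof (intro exI conjI allI)
    show "strategy E V1 \<sigma>" by (rule strat)
    show "u0 \<in> Z" by (rule u0)
    fix N
    show "(\<lambda>k. R \<sigma> u0 [u0] k N) \<longlonglongrightarrow> 1"
      using r_lim[of N u0] all1[of N] u0 unfolding r_def by simp
  qed
qed

end

lemma goodR_Suc_mono: "goodR \<Omega> p (Suc N) xs \<Longrightarrow> goodR \<Omega> p N xs"
  by (induction \<Omega> p "Suc N" xs arbitrary: N rule: goodR.induct)
     (auto split: if_splits elim: goodR.elims)

lemma goodR_count: "goodR \<Omega> p N xs \<Longrightarrow> N \<le> length (filter (\<lambda>x. \<Omega> x = p) xs)"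
  by (induction \<Omega> p N xs rule: goodR.induct) (auto split: if_splits)

lemma goodR_block: "goodR \<Omega> p N (xs @ x # ys) \<Longrightarrow> p < \<Omega> x \<Longrightarrow> goodR \<Omega> p N xs"
  by (induction \<Omega> p N xs rule: goodR.induct) (auto split: if_splits)

lemma L_limsup:
  assumes "\<forall>N. \<exists>k. goodR \<Omega> p (Suc N) (map \<rho> [0..<k])"
  shows "nat_limsup (\<lambda>j. \<Omega> (\<rho> j)) = p"
proof -
  have a: "\<Omega> (\<rho> j) \<le> p" for j
  proof (rule ccontr)
    assume "\<not> \<Omega> (\<rho> j) \<le> p"
    then have B: "p < \<Omega> (\<rho> j)" by simp
    obtain k where k: "goodR \<Omega> p (Suc j) (map \<rho> [0..<k])" using assms by blast
    show False
    proof (cases "k \<le> j")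
      case True
      have "Suc j \<le> length (filter (\<lambda>x. \<Omega> x = p) (map \<rho> [0..<k]))" by (rule goodR_count[OF k])
      also have "\<dots> \<le> k" by (metis length_filter_le length_map length_upt minus_nat.diff_0)
      finally show False using True by simp
    next
      case False
      then have jk: "j < k" by simp
      have "[0..<k] = [0..<j] @ [j..<k]"
        using upt_add_eq_append[of 0 j "k - j"] jk by simp
      also have "[j..<k] = j # [Suc j..<k]" using jk by (rule upt_conv_Cons)
      finally have "map \<rho> [0..<k] = map \<rho> [0..<j] @ \<rho> j # map \<rho> [Suc j..<k]" by simp
      then have "goodR \<Omega> p (Suc j) (map \<rho> [0..<j])" using goodR_block k B by metis
      then have "Suc j \<le> length (filter (\<lambda>x. \<Omega> x = p) (map \<rho> [0..<j]))" by (rule goodR_count)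
      also have "\<dots> \<le> j" by (metis length_filter_le length_map length_upt minus_nat.diff_0)
      finally show False by simp
    qed
  qed
  have b: "\<exists>j\<ge>n. \<Omega> (\<rho> j) = p" for n
  proof (rule ccontr)
    assume nj: "\<not> (\<exists>j\<ge>n. \<Omega> (\<rho> j) = p)"
    obtain k where k: "goodR \<Omega> p (Suc n) (map \<rho> [0..<k])" using assms by blast
    have "Suc n \<le> length (filter (\<lambda>x. \<Omega> x = p) (map \<rho> [0..<k]))" by (rule goodR_count[OF k])
    also have "\<dots> = card {i. i < k \<and> \<Omega> (\<rho> i) = p}"
    proof -
      have "{i. i < k \<and> \<Omega> (map \<rho> [0..<k] ! i) = p} = {i. i < k \<and> \<Omega> (\<rho> i) = p}" by auto
      then show ?thesis by (simp add: length_filter_conv_card)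
    qed
    also have "\<dots> \<le> card {0..<n}"
      by (rule card_mono) (use nj in \<open>auto simp: not_le[symmetric]\<close>)
    finally show False by simp
  qed
  show ?thesis
    unfolding nat_limsup_def
  proof (rule Least_equality)
    show "\<forall>\<^sub>F j in sequentially. \<Omega> (\<rho> j) \<le> p" using a by simp
    fix y assume "\<forall>\<^sub>F j in sequentially. \<Omega> (\<rho> j) \<le> y"
    then obtain n where "\<forall>j\<ge>n. \<Omega> (\<rho> j) \<le> y" by (auto simp: eventually_sequentially)
    then show "p \<le> y" using b[of n] by auto
  qed
qed

context LL begin

lemma play_first:
  "measure (play_measure V1 \<delta> \<sigma> v) {\<rho>. goodR \<Omega> p (Suc N) (map \<rho> [0..<Suc k])}
   = (if v \<in> Bs then 0 else if v \<in> Ps then R \<sigma> v [v] k N else R \<sigma> v [v] k (Suc N))"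
proof -
  have e: "ext V1 \<delta> \<sigma> v [] (Suc k) = map_pmf (append [v]) (fut V1 \<delta> \<sigma> v [v] k)"
    unfolding ext_Suc by (simp add: Kp_def bind_return_pmf ext_def)
  have pre: "append [v] -` {xs. goodR \<Omega> p (Suc N) xs} = {ys. goodR \<Omega> p (Suc N) (v # ys)}" by auto
  show ?thesis
    unfolding play_prob e measure_map_pmf pre R_def
    by (auto simp: Bs_def Ps_def)
qed

lemma gt_zero:
  assumes hyp: "\<forall>v \<sigma>. strategy E V1 \<sigma> \<longrightarrow> measure (play_measure V1 \<delta> \<sigma> v) (Parity \<Omega>) = 1"
    and oddp: "odd p"
  shows "gt x = 0"
proof (rule ccontr)
  assume "gt x \<noteq> 0"
  then have "\<exists>x. gt x > 0" using gt_nonneg[of x] by (auto simp: less_le)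
  then obtain Z where Z: "Z \<noteq> {}" "\<forall>x\<in>Z. x \<notin> Bs" "\<forall>x\<in>Z. x \<notin> V1 \<longrightarrow> succ x \<subseteq> Z"
     "\<forall>x\<in>Z. x \<in> V1 \<longrightarrow> (\<exists>y\<in>succ x. y \<in> Z)" "\<forall>x\<in>Z. \<exists>w\<in>Ps. (x, w) \<in> (EZ Z)\<^sup>*"
    using Z_structure by blast
  obtain \<sigma> u0 where s: "strategy E V1 \<sigma>" and u0: "u0 \<in> Z" and lim: "\<And>N. (\<lambda>k. R \<sigma> u0 [u0] k N) \<longlonglongrightarrow> 1"
    using Z_strategy[OF Z] by blast
  define PM where "PM = play_measure V1 \<delta> \<sigma> u0"
  interpret PS: prob_space PM unfolding PM_def by (rule play_prob_space)
  define A where "A N k = {\<rho>. goodR \<Omega> p N (map \<rho> [0..<k])}" for N k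
  have A_sets: "A N k \<in> sets PM" for N k unfolding A_def PM_def by (rule play_sets)
  define U where "U N = (\<Union>k. A (Suc N) k)" for N
  have U_sets: "U N \<in> sets PM" for N unfolding U_def using A_sets by auto
  have U1: "measure PM (U N) = 1" for N
  proof -
    have lim2: "(\<lambda>k. measure PM (A (Suc N) (Suc k))) \<longlonglongrightarrow> 1"
      unfolding PM_def A_def play_first using Z(2) u0 lim by (cases "u0 \<in> Ps") auto
    have "measure PM (A (Suc N) (Suc k)) \<le> measure PM (U N)" for k
      unfolding U_def by (rule PS.finite_measure_mono) (use U_sets[unfolded U_def] in auto)
    then have "1 \<le> measure PM (U N)"
      by (intro LIMSEQ_le_const2[OF lim2]) auto
    then show ?thesis using PS.prob_le_1[of "U N"] by simp
  qed
  define L where "L = (\<Inter>N. U N)"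
  have L_sets: "L \<in> sets PM" unfolding L_def using U_sets by auto
  have "(\<lambda>N. measure PM (U N)) \<longlonglongrightarrow> measure PM L"
    unfolding L_def
  proof (rule Lim_measure_decseq)
    show "range U \<subseteq> sets PM" using U_sets by auto
    show "decseq U" unfolding decseq_Suc_iff U_def A_def using goodR_Suc_mono by blast
    show "emeasure PM (U n) \<noteq> \<infinity>" for n by simp
  qed
  then have L1: "measure PM L = 1" using U1 by (simp add: LIMSEQ_const_iff)
  have PS_sets: "Parity \<Omega> \<in> sets PM"
    using hyp s measure_notin_sets[of "Parity \<Omega>" PM] unfolding PM_def by force
  have P1: "measure PM (Parity \<Omega>) = 1" using hyp s unfolding PM_def by blast
  have disj: "L \<inter> Parity \<Omega> = {}"
  proof -
    have "\<rho> \<notin> Parity \<Omega>" if "\<rho> \<in> L" for \<rho>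
    proof -
      have "\<forall>N. \<exists>k. goodR \<Omega> p (Suc N) (map \<rho> [0..<k])"
        using that unfolding L_def U_def A_def by auto
      then have "nat_limsup (\<lambda>j. \<Omega> (\<rho> j)) = p" by (rule L_limsup)
      then show ?thesis using oddp unfolding Parity_def by simp
    qed
    then show ?thesis by auto
  qed
  have "measure PM (L \<union> Parity \<Omega>) = 2"
    using PS.finite_measure_Union[OF L_sets PS_sets disj] L1 P1 by simp
  then show False using PS.prob_le_1[of "L \<union> Parity \<Omega>"] by simp
qed

end

theorem lemma3:
  fixes E :: "('v::finite \<times> 'v) set" and V1 :: "'v set" and \<delta> :: "'v \<Rightarrow> 'v pmf"
    and \<Omega>1 :: "'v \<Rightarrow> nat" and p :: nat and \<epsilon> :: real
  assumes "mdp E V1 \<delta>"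
    and "\<forall>v \<sigma>. strategy E V1 \<sigma> \<longrightarrow> measure (play_measure V1 \<delta> \<sigma> v) (Parity \<Omega>1) = 1"
    and "odd p" and "p \<in> range \<Omega>1"
    and "\<epsilon> > 0"
  shows "\<exists>N::nat. \<forall>\<sigma> v. strategy E V1 \<sigma> \<longrightarrow>
           measure (play_measure V1 \<delta> \<sigma> v) (Unlucky \<Omega>1 p N) < \<epsilon>"
proof -
  interpret LL E V1 \<delta> \<Omega>1 p by (rule LL.intro) (rule assms(1))
  have gz: "gt x = 0" for x using gt_zero assms(2,3) by blast
  have "eventually (\<lambda>N. \<forall>x. x \<notin> Bs \<longrightarrow> Hinf N x < \<epsilon> / 2) sequentially"
  proof (rule eventually_all_finite)
    fix x
    show "eventually (\<lambda>N. x \<notin> Bs \<longrightarrow> Hinf N x < \<epsilon> / 2) sequentially"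
    proof (cases "x \<in> Bs")
      case True
      then show ?thesis by simp
    next
      case False
      then have "g x = 0" using gz[of x] by (simp add: gt_def)
      then have "(\<lambda>N. Hinf N x) \<longlonglongrightarrow> 0" using g_lim[of x] by simp
      then have "eventually (\<lambda>N. Hinf N x < \<epsilon> / 2) sequentially"
        by (rule order_tendstoD(2)) (use assms(5) in simp)
      then show ?thesis by (rule eventually_mono) simp
    qed
  qed
  then obtain N0 where N0: "\<And>x. x \<notin> Bs \<Longrightarrow> Hinf N0 x < \<epsilon> / 2"
    by (auto simp: eventually_sequentially)
  show ?thesis
  proof (intro exI[of _ "Suc N0"] allI impI)
    fix \<sigma> v assume s: "strategy E V1 \<sigma>"
    define PM where "PM = play_measure V1 \<delta> \<sigma> v"
    interpret PS: prob_space PM unfolding PM_def by (rule play_prob_space)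
    define A where "A k = {\<rho>. goodR \<Omega>1 p (Suc N0) (map \<rho> [0..<k])}" for k
    have A_sets: "A k \<in> sets PM" for k unfolding A_def PM_def by (rule play_sets)
    have hv: "history E [v]" unfolding history_def by simp
    have Ab: "measure PM (A k) \<le> \<epsilon> / 2" for k
    proof (cases k)
      case 0
      then show ?thesis unfolding A_def using assms(5) by simp
    next
      case (Suc k')
      show ?thesis
      proof (cases "v \<in> Bs")
        case True
        then show ?thesis unfolding A_def PM_def Suc play_first using assms(5) by simp
      next
        case False
        have "R \<sigma> v [v] k' N0 \<le> Hinf N0 v"
          using R_le_H[OF s hv, of v k' N0] H_le_Hinf[of k' N0 v] by simp
        moreover have "R \<sigma> v [v] k' (Suc N0) \<le> Hinf N0 v"
          using R_le_H[OF s hv, of v k' "Suc N0"] H_anti_N[of k' N0 v] H_le_Hinf[of k' N0 v] by simp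
        ultimately show ?thesis
          unfolding A_def PM_def Suc play_first using False N0[OF False] by auto
      qed
    qed
    have U: "Unlucky \<Omega>1 p (Suc N0) = (\<Union>k. A k)"
      unfolding Unlucky_goodR A_def by simp
    have "(\<lambda>k. measure PM (A k)) \<longlonglongrightarrow> measure PM (\<Union>k. A k)"
    proof (rule Lim_measure_incseq)
      show "range A \<subseteq> sets PM" using A_sets by auto
      show "incseq A" unfolding incseq_Suc_iff A_def
        by (auto intro: goodR_append)
    qed simp
    then have "measure PM (\<Union>k. A k) \<le> \<epsilon> / 2"
      by (rule LIMSEQ_le_const2) (use Ab in auto)
    then show "measure (play_measure V1 \<delta> \<sigma> v) (Unlucky \<Omega>1 p (Suc N0)) < \<epsilon>"
      unfolding PM_def[symmetric] U using assms(5) by simp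
  qed
qed

end
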